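(* If $K$ is upward directed, then for every $a\in K$ and every loop $\bar p$ based at $a$, the cycle $\chi_{\bar p}$ is an orthogonal projection of the form $Q\otimes I$ on $H_a\otimes l^2(S_a)$ (zero on the other summands of $\mathcal H$), where $Q$ is the orthogonal projection of $H_a$ onto the domain $H_{\bar p}$.
   Context: $K$ is a partially ordered set; it is upward directed if any two elements have a common upper bound. Elementary paths on $K$: for $b\le a$ the formal symbol $(b,a)$ and for $b\ge a$ the formal symbol $\overline{(b,a)}$; both have starting point $\partial_1=a$ and ending point $\partial_0=b$; $(a,a)=\overline{(a,a)}=:i_a$ is the trivial path. $\overline S$ is the set of finite sequences $\bar p=s_n*\cdots*s_1$ of elementary paths with $\partial_0 s_{i-1}=\partial_1 s_i$; $\partial_1\bar p=\partial_1 s_1$, $\partial_0\bar p=\partial_0 s_n$, and the concatenation $\bar p*\bar q$ is defined when $\partial_1\bar p=\partial_0\bar q$. The equivalence $\sim$ on $\overline S$ is the smallest equivalence relation compatible with concatenation such that for all $a\le b\le c$: $(a,b)*(b,c)\sim(a,c)$, $\overline{(c,b)}*\overline{(b,a)}\sim\overline{(c,a)}$, $(a,b)*\overline{(b,a)}\sim i_a$, $\overline{(b,a)}*(a,b)\sim i_b$. Equivalence classes $p=[\bar p]$ are called paths. $S_a$ denotes the set of paths $p$ with $\partial_0p=a$. A loop based at $a$ is $\bar p\in\overline S$ with $\partial_0\bar p=\partial_1\bar p=a$. For each $a\in K$, $H_a$ is a Hilbert space with orthonormal basis $\{e^a_n\}_{n\ge1}$; for $a\le b$, $\gamma_{ba}:H_a\to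 H_b$ is an isometry mapping each basis vector $e^a_n$ to a basis vector of $\{e^b_m\}$, with $\gamma_{aa}=\mathrm{id}$ and $\gamma_{ca}=\gamma_{cb}\gamma_{ba}$ for $a\le b\le c$. $l^2(S_a)$ is the Hilbert space with orthonormal basis $\{e_p\}_{p\in S_a}$, and $\mathcal H=\bigoplus_{a\in K}H_a\otimes l^2(S_a)$. For $a\le b$, $\chi_a^b\in B(\mathcal H)$ vanishes on all summands other than $H_a\otimes l^2(S_a)$ and satisfies $\chi_a^b(h\otimes e_p)=\gamma_{ba}(h)\otimes e_{[\overline{(b,a)}*\bar p]}$ for $h\in H_a$, $p\in S_a$, $\bar p\in p$; $\chi_a^{b*}$ is its adjoint. For an elementary path put $\chi_{\overline{(b,a)}}=\chi_a^b$ ($a\le b$) and $\chi_{(b,a)}=\chi_b^{a*}$ ($b\le a$), and for $\bar p=s_n*\cdots*s_1\in\overline S$ put $\chi_{\bar p}=\chi_{s_n}\cdots\chi_{s_1}$. For a loop $\bar p$, $\chi_{\bar p}$ is called a cycle. The domain $H_{\bar p}$ of $\bar p$ is the closed subspace of $H_{\partial_1\bar p}$ consisting of the vectors $h$ with $\|\chi_{\bar p}(h\otimes e_s)\|=\|h\|$ for all $s\in S_{\partial_1\bar p}$. *)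

theory Defs
  imports "HOL-Analysis.Analysis"
begin

text \<open>Elementary paths.  \<open>Dn b a\<close> is the formal symbol (b,a) for b \<le> a,
  \<open>Up b a\<close> is the formal symbol overline(b,a) for b \<ge> a.\<close>

datatype 'k epath = Dn 'k 'k | Up 'k 'k

fun ep_valid :: "'k::order epath \<Rightarrow> bool" where
  "ep_valid (Dn b a) = (b \<le> a)"
| "ep_valid (Up b a) = (a \<le> b)"

fun ep_start :: "'k epath \<Rightarrow> 'k" where
  "ep_start (Dn b a) = a"
| "ep_start (Up b a) = a"

fun ep_end :: "'k epath \<Rightarrow> 'k" where
  "ep_end (Dn b a) = b"
| "ep_end (Up b a) = b"

text \<open>A sequence s_n * ... * s_1 is stored as the list [s_n, ..., s_1], so that
  concatenation p * q is list append p @ q.\<close>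

definition wf_seq :: "'k::order epath list \<Rightarrow> bool" where
  "wf_seq l \<longleftrightarrow> l \<noteq> [] \<and> (\<forall>s\<in>set l. ep_valid s) \<and>
     (\<forall>i. Suc i < length l \<longrightarrow> ep_start (l ! i) = ep_end (l ! Suc i))"

definition seq_end :: "'k epath list \<Rightarrow> 'k" where
  "seq_end l = ep_end (hd l)"

definition seq_start :: "'k epath list \<Rightarrow> 'k" where
  "seq_start l = ep_start (last l)"

text \<open>The equivalence \<open>\<sim>\<close>: smallest equivalence relation on well-formed sequences,
  compatible with concatenation, generated by the four relations; the last rule
  identifies the symbols (a,a) and overline(a,a) (both are the trivial path i_a,
  which we represent by \<open>[Dn a a]\<close>).\<close>

inductive peq :: "'k::order epath list \<Rightarrow> 'k epath list \<Rightarrow> bool" where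
  refl: "wf_seq p \<Longrightarrow> peq p p"
| sym: "peq p q \<Longrightarrow> peq q p"
| trans: "peq p q \<Longrightarrow> peq q r \<Longrightarrow> peq p r"
| cong: "peq p p' \<Longrightarrow> peq q q' \<Longrightarrow> wf_seq (p @ q) \<Longrightarrow> wf_seq (p' @ q')
           \<Longrightarrow> peq (p @ q) (p' @ q')"
| dd: "a \<le> b \<Longrightarrow> b \<le> c \<Longrightarrow> peq [Dn a b, Dn b c] [Dn a c]"
| uu: "a \<le> b \<Longrightarrow> b \<le> c \<Longrightarrow> peq [Up c b, Up b a] [Up c a]"
| du: "a \<le> b \<Longrightarrow> peq [Dn a b, Up b a] [Dn a a]"
| ud: "a \<le> b \<Longrightarrow> peq [Up b a, Dn a b] [Dn b b]"
| triv: "peq [Up a a] [Dn a a]"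

definition pclass :: "'k::order epath list \<Rightarrow> 'k epath list set" where
  "pclass p = {q. peq p q}"

definition paths_to :: "'k::order \<Rightarrow> 'k epath list set set" where
  "paths_to a = {pclass p | p. wf_seq p \<and> seq_end p = a}"

definition pext :: "'k::order epath \<Rightarrow> 'k epath list set \<Rightarrow> 'k epath list set" where
  "pext s P = {q. \<exists>p\<in>P. peq (s # p) q}"

definition is_loop :: "'k::order epath list \<Rightarrow> 'k \<Rightarrow> bool" where
  "is_loop p a \<longleftrightarrow> wf_seq p \<and> seq_end p = a \<and> seq_start p = a"

definition upward_directed :: "'k::order itself \<Rightarrow> bool" where
  "upward_directed _ \<longleftrightarrow> (\<forall>a b::'k. \<exists>c. a \<le> c \<and> b \<le> c)"

definition ell2 :: "'i set \<Rightarrow> ('i \<Rightarrow> complex) set" where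
  "ell2 I = {x. (\<forall>i. i \<notin> I \<longrightarrow> x i = 0) \<and> (\<lambda>i. (cmod (x i))\<^sup>2) summable_on UNIV}"

definition l2inner :: "('i \<Rightarrow> complex) \<Rightarrow> ('i \<Rightarrow> complex) \<Rightarrow> complex" where
  "l2inner x y = (\<Sum>\<^sub>\<infinity>i. cnj (x i) * y i)"

definition l2norm :: "('i \<Rightarrow> complex) \<Rightarrow> real" where
  "l2norm x = sqrt (\<Sum>\<^sub>\<infinity>i. (cmod (x i))\<^sup>2)"

definition lin_subspace :: "('i \<Rightarrow> complex) set \<Rightarrow> bool" where
  "lin_subspace V \<longleftrightarrow> (\<lambda>i. 0) \<in> V \<and> (\<forall>x\<in>V. \<forall>y\<in>V. (\<lambda>i. x i + y i) \<in> V)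
     \<and> (\<forall>c::complex. \<forall>x\<in>V. (\<lambda>i. c * x i) \<in> V)"

definition is_orth_proj :: "('i \<Rightarrow> complex) set \<Rightarrow> ('i \<Rightarrow> complex) set
      \<Rightarrow> (('i \<Rightarrow> complex) \<Rightarrow> ('i \<Rightarrow> complex)) \<Rightarrow> bool" where
  "is_orth_proj H V P \<longleftrightarrow> V \<subseteq> H \<and> lin_subspace V \<and>
     (\<forall>x\<in>H. P x \<in> V \<and> (\<forall>v\<in>V. l2inner v (\<lambda>i. x i - P x i) = 0))"

text \<open>Each H_a is l^2(nat) with its standard basis (e^a_n corresponds to the n-th unit
  vector, indices shifted to start at 0).  The isometry \<gamma>_{ba} (a \<le> b) maps basis
  vectors to basis vectors, hence is given by an injective index map \<open>f b a\<close>: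
  \<gamma>_{ba}(e^a_n) = e^b_{f b a n}.

  The big space \<H> = \<Oplus>_a H_a \<otimes> l^2(S_a) is l^2 of the index set
  {(a,n,P). P \<in> S_a}; the basis vector e^a_n \<otimes> e_P is the indicator of (a,n,P).\<close>

type_synonym 'k idx = "'k \<times> nat \<times> 'k epath list set"

definition Hidx :: "'k::order idx set" where
  "Hidx = {(c, n, P). P \<in> paths_to c}"

definition HH :: "('k::order idx \<Rightarrow> complex) set" where
  "HH = ell2 Hidx"

text \<open>\<chi>_a^b (a \<le> b): e^a_n \<otimes> e_P \<mapsto> e^b_{f b a n} \<otimes> e_{[overline(b,a) * P]}, zero on the
  other summands.  In coordinates: the value at (b,m,Q) is the coefficient at the
  (unique, if any) preimage (a,n,P).  The summation set has at most one element.\<close>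

definition chi_up :: "('k \<Rightarrow> 'k \<Rightarrow> nat \<Rightarrow> nat) \<Rightarrow> 'k::order \<Rightarrow> 'k
      \<Rightarrow> ('k idx \<Rightarrow> complex) \<Rightarrow> ('k idx \<Rightarrow> complex)" where
  "chi_up f b a x = (\<lambda>(c, m, Q). if c = b then
      (\<Sum>(n, P)\<in>{(n, P). P \<in> paths_to a \<and> f b a n = m \<and> pext (Up b a) P = Q}. x (a, n, P))
    else 0)"

definition chi_up_adj :: "('k \<Rightarrow> 'k \<Rightarrow> nat \<Rightarrow> nat) \<Rightarrow> 'k::order \<Rightarrow> 'k
      \<Rightarrow> ('k idx \<Rightarrow> complex) \<Rightarrow> ('k idx \<Rightarrow> complex)" where
  "chi_up_adj f b a x = (\<lambda>(c, n, P). if c = a \<and> P \<in> paths_to a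
      then x (b, f b a n, pext (Up b a) P) else 0)"

fun chi_elem :: "('k \<Rightarrow> 'k \<Rightarrow> nat \<Rightarrow> nat) \<Rightarrow> 'k::order epath
      \<Rightarrow> ('k idx \<Rightarrow> complex) \<Rightarrow> ('k idx \<Rightarrow> complex)" where
  "chi_elem f (Up b a) = chi_up f b a"
| "chi_elem f (Dn b a) = chi_up_adj f a b"

definition chi_seq :: "('k \<Rightarrow> 'k \<Rightarrow> nat \<Rightarrow> nat) \<Rightarrow> 'k::order epath list
      \<Rightarrow> ('k idx \<Rightarrow> complex) \<Rightarrow> ('k idx \<Rightarrow> complex)" where
  "chi_seq f l = foldr (\<lambda>s g. chi_elem f s \<circ> g) l id"

definition tens :: "'k \<Rightarrow> (nat \<Rightarrow> complex) \<Rightarrow> 'k epath list set \<Rightarrow> ('k idx \<Rightarrow> complex)" where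
  "tens a h s = (\<lambda>(c, n, P). if c = a \<and> P = s then h n else 0)"

definition pdom :: "('k \<Rightarrow> 'k \<Rightarrow> nat \<Rightarrow> nat) \<Rightarrow> 'k::order epath list \<Rightarrow> (nat \<Rightarrow> complex) set" where
  "pdom f p = {h \<in> ell2 UNIV. \<forall>s\<in>paths_to (seq_start p).
      l2norm (chi_seq f p (tens (seq_start p) h s)) = l2norm h}"

end

theory Submission
  imports Defs
begin


fun chain :: "'k epath list \<Rightarrow> bool" where
  "chain (s # t # l) = (ep_start s = ep_end t \<and> chain (t # l))"
| "chain _ = True"

lemma chain_nth: "chain l \<longleftrightarrow> (\<forall>i. Suc i < length l \<longrightarrow> ep_start (l ! i) = ep_end (l ! Suc i))"
proof (induction l rule: chain.induct)
  case (1 s t l)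
  show ?case
  proof
    assume "chain (s # t # l)"
    then show "\<forall>i. Suc i < length (s # t # l) \<longrightarrow> ep_start ((s # t # l) ! i) = ep_end ((s # t # l) ! Suc i)"
      using 1 by (auto simp: nth_Cons split: nat.splits)
  next
    assume H: "\<forall>i. Suc i < length (s # t # l) \<longrightarrow> ep_start ((s # t # l) ! i) = ep_end ((s # t # l) ! Suc i)"
    have "ep_start s = ep_end t" using H[rule_format, of 0] by simp
    moreover have "chain (t # l)" using 1 H by (metis Suc_less_eq length_Cons nth_Cons_Suc)
    ultimately show "chain (s # t # l)" by simp
  qed
qed (auto simp: less_Suc_eq)

lemma wf_chain: "wf_seq l \<longleftrightarrow> l \<noteq> [] \<and> (\<forall>s\<in>set l. ep_valid s) \<and> chain l"
  unfolding wf_seq_def chain_nth by simp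

lemma wf_single[simp]: "wf_seq [s] \<longleftrightarrow> ep_valid s"
  by (simp add: wf_chain)

lemma wf_cons2[simp]: "wf_seq (s # t # l) \<longleftrightarrow> ep_valid s \<and> ep_start s = ep_end t \<and> wf_seq (t # l)"
  by (auto simp: wf_chain)

lemma wf_nonempty: "wf_seq l \<Longrightarrow> l \<noteq> []"
  by (simp add: wf_chain)

lemma wf_append: "p \<noteq> [] \<Longrightarrow> q \<noteq> [] \<Longrightarrow>
   wf_seq (p @ q) \<longleftrightarrow> wf_seq p \<and> wf_seq q \<and> seq_start p = seq_end q"
proof (induction p)
  case Nil then show ?case by simp
next
  case (Cons s p)
  show ?case
  proof (cases p)
    case Nil
    then show ?thesis using Cons.prems by (cases q) (auto simp: seq_start_def seq_end_def)
  next
    case (Cons t p')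
    then show ?thesis using Cons.IH Cons.prems
      by (auto simp: seq_start_def seq_end_def)
  qed
qed

lemma seq_end_app[simp]: "p \<noteq> [] \<Longrightarrow> seq_end (p @ q) = seq_end p"
  by (cases p) (auto simp: seq_end_def)
lemma seq_start_app[simp]: "q \<noteq> [] \<Longrightarrow> seq_start (p @ q) = seq_start q"
  by (simp add: seq_start_def)
lemma seq_end_cons[simp]: "seq_end (s # l) = ep_end s"
  by (simp add: seq_end_def)
lemma seq_start_cons2[simp]: "seq_start (s # t # l) = seq_start (t # l)"
  by (simp add: seq_start_def)
lemma seq_start_single[simp]: "seq_start [s] = ep_start s"
  by (simp add: seq_start_def)

lemma peq_props: "peq p q \<Longrightarrow> wf_seq p \<and> wf_seq q \<and> seq_end p = seq_end q \<and> seq_start p = seq_start q"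
proof (induction rule: peq.induct)
  case (cong p p' q q')
  then have "p \<noteq> []" "q \<noteq> []" "p' \<noteq> []" "q' \<noteq> []" using wf_nonempty by auto
  then show ?case using cong by simp
qed auto

lemma peq_refl_iff: "peq p p \<longleftrightarrow> wf_seq p"
  using peq.refl peq_props by blast

lemma peq_mid: "peq u u' \<Longrightarrow> wf_seq (x @ u @ y) \<Longrightarrow> peq (x @ u @ y) (x @ u' @ y)"
proof -
  assume H: "peq u u'" "wf_seq (x @ u @ y)"
  from peq_props[OF H(1)] have P: "wf_seq u" "wf_seq u'" "seq_end u = seq_end u'" "seq_start u = seq_start u'" by auto
  have u0: "u \<noteq> []" "u' \<noteq> []" using P wf_nonempty by auto
  have R: "peq (u @ y) (u' @ y)" if "wf_seq (u @ y)"
  proof (cases "y = []")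
    case True then show ?thesis using H by simp
  next
    case False
    then have "wf_seq y" "seq_start u = seq_end y" using that u0 wf_append by blast+
    then show ?thesis using peq.cong[OF H(1) peq.refl[of y]] that False u0 P wf_append by metis
  qed
  show ?thesis
  proof (cases "x = []")
    case True then show ?thesis using R H by simp
  next
    case False
    have wuy: "wf_seq (u @ y)" and wx: "wf_seq x" and st: "seq_start x = seq_end (u @ y)"
      using H(2) False u0 wf_append[of x "u@y"] by auto
    have "wf_seq (u' @ y)" using peq_props[OF R[OF wuy]] by simp
    moreover have "seq_end (u' @ y) = seq_end (u @ y)" using peq_props[OF R[OF wuy]] by simp
    ultimately have "wf_seq (x @ u' @ y)" using wx st False u0 wf_append[of x "u'@y"] by auto
    then show ?thesis using peq.cong[OF peq.refl[OF wx] R[OF wuy]] H(2) by simp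
  qed
qed

lemma peq_left: "peq u u' \<Longrightarrow> wf_seq (x @ u) \<Longrightarrow> peq (x @ u) (x @ u')"
  using peq_mid[of u u' x "[]"] by simp
lemma peq_right: "peq u u' \<Longrightarrow> wf_seq (u @ y) \<Longrightarrow> peq (u @ y) (u' @ y)"
  using peq_mid[of u u' "[]" y] by simp




declare peq.trans[trans]

lemma peq_right': "peq u u' \<Longrightarrow> wf_seq (u @ y) \<Longrightarrow> v = u @ y \<Longrightarrow> v' = u' @ y \<Longrightarrow> peq v v'"
  using peq_right by blast
lemma peq_left': "peq u u' \<Longrightarrow> wf_seq (x @ u) \<Longrightarrow> v = x @ u \<Longrightarrow> v' = x @ u' \<Longrightarrow> peq v v'"
  using peq_left by blast
lemma peq_mid': "peq u u' \<Longrightarrow> wf_seq (x @ u @ y) \<Longrightarrow> v = x @ u @ y \<Longrightarrow> v' = x @ u' @ y \<Longrightarrow> peq v v'"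
  using peq_mid by blast

lemma Dnaa: assumes "wf_seq p" "seq_end p = a" shows "peq (Dn a a # p) p"
proof -
  obtain s l where p: "p = s # l" using assms wf_nonempty by (cases p) auto
  show ?thesis
  proof (cases s)
    case (Dn b c)
    then have "b = a" "a \<le> c" using assms p by (auto simp: wf_chain)
    then show ?thesis using peq_right'[OF peq.dd[of a a c], of l] assms p Dn by simp
  next
    case (Up b c)
    then have "b = a" "c \<le> a" using assms p by (auto simp: wf_chain)
    have 1: "peq (Dn a a # p) (Up a a # p)"
      using peq_right'[OF peq.sym[OF peq.triv[of a]], of p] assms p Up \<open>b = a\<close> by simp
    have 2: "peq (Up a a # p) p"
      using peq_right'[OF peq.uu[of c a a], of l] assms p Up \<open>b = a\<close> \<open>c \<le> a\<close> by simp
    show ?thesis using peq.trans[OF 1 2] .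
  qed
qed

lemma cancel_UD: assumes "a \<le> b" "wf_seq q" "seq_end q = b" shows "peq (Up b a # Dn a b # q) q"
proof -
  have "peq (Up b a # Dn a b # q) (Dn b b # q)"
    proof (rule peq_right'[OF peq.ud[OF assms(1)], of q])
    obtain t l where "q = t # l" using assms wf_nonempty by (cases q) auto
    then show "wf_seq ([Up b a, Dn a b] @ q)" using assms by simp
  qed auto
  then show ?thesis using Dnaa[OF assms(2,3)] peq.trans by blast
qed

lemma cancel_DU: assumes "a \<le> b" "wf_seq q" "seq_end q = a" shows "peq (Dn a b # Up b a # q) q"
proof -
  have "peq (Dn a b # Up b a # q) (Dn a a # q)"
    proof (rule peq_right'[OF peq.du[OF assms(1)], of q])
    obtain t l where "q = t # l" using assms wf_nonempty by (cases q) auto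
    then show "wf_seq ([Dn a b, Up b a] @ q)" using assms by simp
  qed auto
  then show ?thesis using Dnaa[OF assms(2,3)] peq.trans by blast
qed

lemma canon_le: assumes "a \<le> c" "b \<le> c" "c \<le> d"
  shows "peq [Dn b c, Up c a] [Dn b d, Up d a]"
proof -
  have "b \<le> d" "a \<le> d" using assms order_trans by blast+
  note assms = assms this
  have 1: "peq [Dn b d, Up d a] [Dn b c, Dn c d, Up d a]"
    using peq_right'[OF peq.sym[OF peq.dd[of b c d]], of "[Up d a]"] assms by auto
  have 2: "peq [Dn b c, Dn c d, Up d a] [Dn b c, Dn c d, Up d c, Up c a]"
    using peq_left'[OF peq.sym[OF peq.uu[of a c d]], of "[Dn b c, Dn c d]"] assms by auto
  have 3: "peq [Dn b c, Dn c d, Up d c, Up c a] [Dn b c, Dn c c, Up c a]"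
    using peq_mid'[OF peq.du[of c d], of "[Dn b c]" "[Up c a]"] assms by auto
  have 4: "peq [Dn b c, Dn c c, Up c a] [Dn b c, Up c a]"
    using peq_right'[OF peq.dd[of b c c], of "[Up c a]"] assms by auto
  show ?thesis using 1 2 3 4 by (meson peq.sym peq.trans)
qed

lemma canon_move: assumes dir: "upward_directed TYPE('k::order)"
  and "a \<le> c" "b \<le> c" "a \<le> d" "b \<le> (d::'k)"
  shows "peq [Dn b c, Up c a] [Dn b d, Up d a]"
proof -
  obtain e where "c \<le> e" "d \<le> e" using dir unfolding upward_directed_def by blast
  then show ?thesis using canon_le[of a c b e] canon_le[of a d b e] assms
    by (meson peq.sym peq.trans)
qed

lemma homotopy: assumes dir: "upward_directed TYPE('k::order)"
  shows "wf_seq (l :: 'k epath list) \<Longrightarrow> seq_start l \<le> c \<Longrightarrow> seq_end l \<le> c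
     \<Longrightarrow> peq l [Dn (seq_end l) c, Up c (seq_start l)]"
proof (induction l arbitrary: c)
  case Nil then show ?case by (simp add: wf_chain)
next
  case (Cons s l)
  show ?case
  proof (cases "l = []")
    case True
    then show ?thesis
    proof (cases s)
      case (Dn b a)
      then have ba: "b \<le> a" "a \<le> c" "b \<le> c" using Cons.prems True by auto
      have "peq [Dn b a] [Dn b a, Dn a a]" using peq.sym[OF peq.dd[of b a a]] ba by simp
      also have "peq \<dots> [Dn b a, Dn a c, Up c a]"
        using peq_left'[OF peq.sym[OF peq.du[of a c]], of "[Dn b a]"] ba by auto
      also have "peq \<dots> [Dn b c, Up c a]"
        using peq_right'[OF peq.dd[of b a c], of "[Up c a]"] ba by auto
      finally show ?thesis using True Dn by simp
    next
      case (Up b a)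
      then have ba: "a \<le> b" "a \<le> c" "b \<le> c" using Cons.prems True by auto
      have "peq [Up b a] [Up b b, Up b a]" using peq.sym[OF peq.uu[of a b b]] ba by simp
      also have "peq \<dots> [Dn b b, Up b a]"
        using peq_right'[OF peq.triv[of b], of "[Up b a]"] ba by auto
      also have "peq \<dots> [Dn b c, Up c b, Up b a]"
        using peq_right'[OF peq.sym[OF peq.du[of b c]], of "[Up b a]"] ba by auto
      also have "peq \<dots> [Dn b c, Up c a]"
        using peq_left'[OF peq.uu[of a b c], of "[Dn b c]"] ba by auto
      finally show ?thesis using True Up by simp
    qed
  next
    case False
    define a where "a = seq_start l"
    define e where "e = seq_end l"
    have wl: "wf_seq l" and se: "ep_start s = e" and vs: "ep_valid s"
      using Cons.prems False unfolding e_def by (cases l; auto)+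
    have sa: "seq_start (s # l) = a" using False a_def by (cases l) auto
    obtain d where d: "c \<le> d" "e \<le> d" using dir unfolding upward_directed_def by blast
    have ad: "a \<le> d" using Cons.prems(2) sa d by auto
    have IH: "peq l [Dn e d, Up d a]" using Cons.IH[OF wl] ad d unfolding a_def e_def by auto
    have 1: "peq (s # l) [s, Dn e d, Up d a]"
      using peq_left'[OF IH, of "[s]"] Cons.prems(1) by auto
    define b where "b = ep_end s"
    have bc: "b \<le> c" using Cons.prems b_def by simp
    have 2: "peq [s, Dn e d, Up d a] [Dn b d, Up d a]"
    proof (cases s)
      case (Dn b' e')
      then have "b' = b" "e' = e" "b \<le> e" using se vs b_def by auto
      then show ?thesis using peq_right'[OF peq.dd[of b e d], of "[Up d a]"] d ad Dn by auto
    next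
      case (Up b' e')
      then have X: "b' = b" "e' = e" "e \<le> b" using se vs b_def by auto
      have "peq [Up b e, Dn e d, Up d a] [Up b e, Dn e b, Dn b d, Up d a]"
        using peq_mid'[OF peq.sym[OF peq.dd[of e b d]], of "[Up b e]" "[Up d a]"] X d ad bc by auto
      also have "peq \<dots> [Dn b d, Up d a]"
        using cancel_UD[of e b "[Dn b d, Up d a]"] X d ad bc by auto
      finally show ?thesis using X Up by simp
    qed
    have 3: "peq [Dn b d, Up d a] [Dn b c, Up c a]"
      using canon_move[OF dir] d ad bc Cons.prems(2) sa by auto
    show ?thesis using 1 2 3 sa b_def by (metis peq.trans seq_end_cons)
  qed
qed

lemma loop_triv: assumes dir: "upward_directed TYPE('k::order)"
  and "is_loop (l::'k epath list) a" shows "peq l [Dn a a]"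
proof -
  have "peq l [Dn a a, Up a a]" using homotopy[OF dir, of l a] assms unfolding is_loop_def by auto
  then show ?thesis using peq.du[of a a] peq.trans by blast
qed




definition form :: "'k \<Rightarrow> 'k \<Rightarrow> (nat \<Rightarrow> nat option) \<Rightarrow> ('k epath list set \<Rightarrow> 'k epath list set)
   \<Rightarrow> (('k::order idx \<Rightarrow> complex) \<Rightarrow> ('k idx \<Rightarrow> complex)) \<Rightarrow> bool" where
 "form b a \<psi> R F \<longleftrightarrow> (\<forall>x. F x = (\<lambda>(c,m,Q). if c = b \<and> Q \<in> paths_to b then
      (case \<psi> m of None \<Rightarrow> 0 | Some n \<Rightarrow> x (a, n, R Q)) else 0))"

lemma form_compose:
  assumes "form b e \<psi>2 R2 F2" "form e a \<psi>1 R1 F1" "\<forall>Q\<in>paths_to b. R2 Q \<in> paths_to e"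
  shows "form b a (\<lambda>m. Option.bind (\<psi>2 m) \<psi>1) (R1 \<circ> R2) (F2 \<circ> F1)"
  unfolding form_def
proof (intro allI ext, clarify)
  fix x c m Q
  have F2: "F2 y = (\<lambda>(c,m,Q). if c = b \<and> Q \<in> paths_to b then
      (case \<psi>2 m of None \<Rightarrow> 0 | Some n \<Rightarrow> y (e, n, R2 Q)) else 0)" for y
    using assms(1) unfolding form_def by blast
  have F1: "F1 y = (\<lambda>(c,m,Q). if c = e \<and> Q \<in> paths_to e then
      (case \<psi>1 m of None \<Rightarrow> 0 | Some n \<Rightarrow> y (a, n, R1 Q)) else 0)" for y
    using assms(2) unfolding form_def by blast
  show "(F2 \<circ> F1) x (c, m, Q) = (if c = b \<and> Q \<in> paths_to b then
      (case Option.bind (\<psi>2 m) \<psi>1 of None \<Rightarrow> 0 | Some n \<Rightarrow> x (a, n, (R1 \<circ> R2) Q)) else 0)"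
  proof (cases "c = b \<and> Q \<in> paths_to b")
    case True
    then have "R2 Q \<in> paths_to e" using assms(3) by blast
    then show ?thesis using True by (simp add: F1 F2 split: option.split)
  next
    case False
    then show ?thesis unfolding o_def F2 by auto
  qed
qed

lemma paths_to_iff: "P \<in> paths_to a \<longleftrightarrow> (\<exists>p. wf_seq p \<and> seq_end p = a \<and> P = pclass p)"
  unfolding paths_to_def by auto

lemma pclass_eq_iff: "wf_seq p \<Longrightarrow> pclass p = pclass q \<longleftrightarrow> peq p q"
proof
  assume "wf_seq p" "pclass p = pclass q"
  then have "p \<in> pclass q" using peq.refl unfolding pclass_def by auto
  then show "peq p q" unfolding pclass_def by (simp add: peq.sym)
next
  assume H: "peq p q"
  show "pclass p = pclass q" unfolding pclass_def
  proof (intro set_eqI iffI; simp)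
    fix r assume "peq p r" then show "peq q r" using H peq.sym peq.trans by metis
  next
    fix r assume "peq q r" then show "peq p r" using H peq.trans by metis
  qed
qed

lemma pext_pclass: assumes "wf_seq (s # q)" "wf_seq q" shows "pext s (pclass q) = pclass (s # q)"
proof -
  have q: "wf_seq q" using assms by simp
  show ?thesis unfolding pext_def
  proof (intro set_eqI iffI)
    fix r assume "r \<in> {r. \<exists>p\<in>pclass q. peq (s # p) r}"
    then obtain p where p: "peq q p" "peq (s # p) r" unfolding pclass_def by auto
    have "peq (s # q) (s # p)" using peq_left[OF p(1), of "[s]"] assms by simp
    then show "r \<in> pclass (s # q)" using p(2) peq.trans unfolding pclass_def by (simp add: peq.trans)
  next
    fix r assume "r \<in> pclass (s # q)"
    then show "r \<in> {r. \<exists>p\<in>pclass q. peq (s # p) r}"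
      using q peq.refl[of q] unfolding pclass_def by auto
  qed
qed

lemma wf_cons_iff: "wf_seq q \<Longrightarrow> wf_seq (s # q) \<longleftrightarrow> ep_valid s \<and> ep_start s = seq_end q"
  by (cases q) (auto simp: wf_chain seq_end_def)

lemma form_Dn: "b \<le> a \<Longrightarrow> form b a (\<lambda>n. Some (f a b n)) (pext (Up a b)) (chi_up_adj f a b)"
  unfolding form_def chi_up_adj_def by (simp add: fun_eq_iff)

lemma pext_Up_iff:
  assumes ab: "a \<le> b" and P: "P \<in> paths_to a" and Q: "Q \<in> paths_to b"
  shows "pext (Up b a) P = Q \<longleftrightarrow> P = pext (Dn a b) Q"
proof -
  obtain p where p: "wf_seq p" "seq_end p = a" "P = pclass p" using P paths_to_iff by blast
  obtain q where q: "wf_seq q" "seq_end q = b" "Q = pclass q" using Q paths_to_iff by blast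
  have w1: "wf_seq (Up b a # p)" using p ab by (simp add: wf_cons_iff[OF p(1)])
  have w2: "wf_seq (Dn a b # q)" using q ab by (simp add: wf_cons_iff[OF q(1)])
  have w3: "wf_seq (Dn a b # Up b a # p)" using w1 ab by (cases p) (auto simp: wf_chain)
  have w4: "wf_seq (Up b a # Dn a b # q)" using w2 ab by (cases q) (auto simp: wf_chain)
  have "pext (Up b a) P = Q \<longleftrightarrow> peq (Up b a # p) q"
    using pext_pclass[OF w1 p(1)] p q pclass_eq_iff[OF w1] by simp
  also have "\<dots> \<longleftrightarrow> peq p (Dn a b # q)"
  proof
    assume H: "peq (Up b a # p) q"
    have "peq (Dn a b # Up b a # p) (Dn a b # q)" using peq_left[OF H, of "[Dn a b]"] w3 by simp
    then show "peq p (Dn a b # q)" using cancel_DU[OF ab p(1,2)] peq.sym peq.trans by metis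
  next
    assume H: "peq p (Dn a b # q)"
    have "peq (Up b a # p) (Up b a # Dn a b # q)" using peq_left[OF H, of "[Up b a]"] w1 by simp
    then show "peq (Up b a # p) q" using cancel_UD[OF ab q(1,2)] peq.trans by metis
  qed
  also have "\<dots> \<longleftrightarrow> P = pext (Dn a b) Q"
    using pext_pclass[OF w2 q(1)] p q pclass_eq_iff[OF p(1)] by simp
  finally show ?thesis .
qed

lemma pext_Up_in: assumes "a \<le> b" "P \<in> paths_to a" shows "pext (Up b a) P \<in> paths_to b"
proof -
  obtain p where p: "wf_seq p" "seq_end p = a" "P = pclass p" using assms paths_to_iff by blast
  have w1: "wf_seq (Up b a # p)" using p assms by (simp add: wf_cons_iff[OF p(1)])
  show ?thesis using pext_pclass[OF w1 p(1)] p w1 paths_to_iff by fastforce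
qed

lemma pext_Dn_in: assumes "a \<le> b" "Q \<in> paths_to b" shows "pext (Dn a b) Q \<in> paths_to a"
proof -
  obtain p where p: "wf_seq p" "seq_end p = b" "Q = pclass p" using assms paths_to_iff by blast
  have w1: "wf_seq (Dn a b # p)" using p assms by (simp add: wf_cons_iff[OF p(1)])
  show ?thesis using pext_pclass[OF w1 p(1)] p w1 paths_to_iff by fastforce
qed

lemma form_Up: assumes ab: "a \<le> b" and inj: "inj (f b a)"
  shows "form b a (\<lambda>m. if m \<in> range (f b a) then Some (inv (f b a) m) else None)
     (pext (Dn a b)) (chi_up f b a)"
  unfolding form_def
proof (intro allI ext, clarify)
  fix x c m Q
  let ?S = "{(n, P). P \<in> paths_to a \<and> f b a n = m \<and> pext (Up b a) P = Q}"
  have cu: "chi_up f b a x (c, m, Q) = (if c = b then (\<Sum>(n, P)\<in>?S. x (a, n, P)) else 0)"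
    by (simp add: chi_up_def)
  show "chi_up f b a x (c, m, Q) = (if c = b \<and> Q \<in> paths_to b then
      (case (if m \<in> range (f b a) then Some (inv (f b a) m) else None) of None \<Rightarrow> 0
         | Some n \<Rightarrow> x (a, n, pext (Dn a b) Q)) else 0)"
  proof (cases "c = b \<and> Q \<in> paths_to b")
    case True
    have "?S = (if m \<in> range (f b a) then {(inv (f b a) m, pext (Dn a b) Q)} else {})"
    proof (cases "m \<in> range (f b a)")
      case mr: True
      then obtain n0 where n0: "m = f b a n0" by auto
      have iv: "inv (f b a) m = n0" using n0 inj by (simp add: inv_f_f)
      have "?S = {(n0, pext (Dn a b) Q)}"
      proof (intro set_eqI iffI)
        fix z assume "z \<in> ?S"
        then obtain n P where z: "z = (n, P)" "P \<in> paths_to a" "f b a n = m" "pext (Up b a) P = Q" by auto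
        have "n = n0" using z(3) n0 inj by (simp add: inj_eq)
        moreover have "P = pext (Dn a b) Q" using pext_Up_iff[OF ab z(2)] True z(4) by blast
        ultimately show "z \<in> {(n0, pext (Dn a b) Q)}" using z by simp
      next
        fix z assume "z \<in> {(n0, pext (Dn a b) Q)}"
        then have z: "z = (n0, pext (Dn a b) Q)" by simp
        have P: "pext (Dn a b) Q \<in> paths_to a" using pext_Dn_in[OF ab] True by blast
        have "pext (Up b a) (pext (Dn a b) Q) = Q" using pext_Up_iff[OF ab P] True by blast
        then show "z \<in> ?S" using z P n0 by simp
      qed
      then show ?thesis using mr iv by simp
    next
      case False
      then show ?thesis by auto
    qed
    then show ?thesis using True unfolding cu by auto
  next
    case False
    show ?thesis
    proof (cases "c = b")
      case cb: True
      then have "Q \<notin> paths_to b" using False by blast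
      then have E: "?S = {}" using pext_Up_in[OF ab] by auto
      have "chi_up f b a x (c, m, Q) = 0" unfolding cu E using cb by simp
      then show ?thesis using False by auto
    next
      case cb: False
      then show ?thesis unfolding cu by simp
    qed
  qed
qed

definition good :: "('k \<Rightarrow> 'k \<Rightarrow> nat \<Rightarrow> nat) \<Rightarrow> 'k::order epath list \<Rightarrow> (nat \<Rightarrow> nat option)
   \<Rightarrow> ('k epath list set \<Rightarrow> 'k epath list set) \<Rightarrow> bool" where
 "good f l \<psi> R \<longleftrightarrow> form (seq_end l) (seq_start l) \<psi> R (chi_seq f l) \<and>
   (\<forall>m n. \<psi> m = Some n \<longrightarrow> (\<forall>c. seq_start l \<le> c \<longrightarrow> seq_end l \<le> c \<longrightarrow>
        f c (seq_start l) n = f c (seq_end l) m)) \<and>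
   (\<forall>q. wf_seq q \<and> seq_end q = seq_end l \<longrightarrow> (\<exists>q'. wf_seq q' \<and> seq_end q' = seq_start l \<and>
        R (pclass q) = pclass q' \<and> peq (l @ q') q))"

lemma chi_seq_single: "chi_seq f [s] = chi_elem f s"
  by (simp add: chi_seq_def)

lemma chi_seq_cons: "chi_seq f (s # l) = chi_elem f s \<circ> chi_seq f l"
  by (simp add: chi_seq_def)

lemma good_elem:
  assumes f_inj: "\<And>a b. a \<le> b \<Longrightarrow> inj (f b a)"
    and f_comp: "\<And>a b c. a \<le> b \<Longrightarrow> b \<le> c \<Longrightarrow> f c a = f c b \<circ> f b a"
    and v: "ep_valid s"
  shows "\<exists>\<psi> R. good f [s] \<psi> R"
proof (cases s)
  case (Dn b a)
  then have ba: "b \<le> a" using v by simp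
  have "good f [s] (\<lambda>n. Some (f a b n)) (pext (Up a b))"
    unfolding good_def
  proof (intro conjI allI impI)
    show "form (seq_end [s]) (seq_start [s]) (\<lambda>n. Some (f a b n)) (pext (Up a b)) (chi_seq f [s])"
      using form_Dn[OF ba] Dn by (simp add: chi_seq_single)
  next
    fix m n c assume "Some (f a b m) = Some n" "seq_start [s] \<le> c" "seq_end [s] \<le> c"
    then show "f c (seq_start [s]) n = f c (seq_end [s]) m"
      using f_comp[OF ba, of c] Dn by auto
  next
    fix q assume q: "wf_seq q \<and> seq_end q = seq_end [s]"
    have w: "wf_seq (Up a b # q)" using q Dn ba by (simp add: wf_cons_iff)
    show "\<exists>q'. wf_seq q' \<and> seq_end q' = seq_start [s] \<and> pext (Up a b) (pclass q) = pclass q' \<and> peq ([s] @ q') q"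
      apply (rule exI[of _ "Up a b # q"])
      using w q pext_pclass[OF w] cancel_DU[OF ba, of q] Dn by simp
  qed
  then show ?thesis by blast
next
  case (Up b a)
  then have ab: "a \<le> b" using v by simp
  have "good f [s] (\<lambda>m. if m \<in> range (f b a) then Some (inv (f b a) m) else None) (pext (Dn a b))"
    unfolding good_def
  proof (intro conjI allI impI)
    show "form (seq_end [s]) (seq_start [s]) (\<lambda>m. if m \<in> range (f b a) then Some (inv (f b a) m) else None) (pext (Dn a b)) (chi_seq f [s])"
      using form_Up[of a b f, OF ab f_inj[OF ab]] Up by (simp add: chi_seq_single)
  next
    fix m n c assume H: "(if m \<in> range (f b a) then Some (inv (f b a) m) else None) = Some n"
      "seq_start [s] \<le> c" "seq_end [s] \<le> c"
    then have "f b a n = m" by (auto simp: f_inv_into_f split: if_splits)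
    then show "f c (seq_start [s]) n = f c (seq_end [s]) m"
      using f_comp[OF ab, of c] H Up by auto
  next
    fix q assume q: "wf_seq q \<and> seq_end q = seq_end [s]"
    have w: "wf_seq (Dn a b # q)" using q Up ab by (simp add: wf_cons_iff)
    show "\<exists>q'. wf_seq q' \<and> seq_end q' = seq_start [s] \<and> pext (Dn a b) (pclass q) = pclass q' \<and> peq ([s] @ q') q"
      apply (rule exI[of _ "Dn a b # q"])
      using w q pext_pclass[OF w] cancel_UD[OF ab, of q] Up by simp
  qed
  then show ?thesis by blast
qed

lemma good_cons:
  assumes f_inj: "\<And>a b. a \<le> b \<Longrightarrow> inj (f b a)"
    and f_comp: "\<And>a b c. a \<le> b \<Longrightarrow> b \<le> c \<Longrightarrow> f c a = f c b \<circ> f b a"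
    and dir: "upward_directed TYPE('k::order)"
    and g1: "good f [s] \<psi>1 R1" and g2: "good f l \<psi>2 R2"
    and w: "wf_seq (s # (l::'k epath list))" and l: "l \<noteq> []"
  shows "good f (s # l) (\<lambda>m. Option.bind (\<psi>1 m) \<psi>2) (R2 \<circ> R1)"
proof -
  define a where "a = seq_start l"
  define e where "e = seq_end l"
  define b where "b = ep_end s"
  have wl: "wf_seq l" and se: "ep_start s = e" using w l unfolding e_def by (cases l; auto)+
  have sa: "seq_start (s # l) = a" "seq_end (s # l) = b" using l unfolding a_def b_def by (cases l; auto)+
  have s1: "seq_start [s] = e" "seq_end [s] = b" using se b_def by auto
  have F1: "form b e \<psi>1 R1 (chi_elem f s)" using g1 s1 unfolding good_def by (simp add: chi_seq_single)
  have F2: "form e a \<psi>2 R2 (chi_seq f l)" using g2 unfolding good_def a_def e_def by simp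
  have I1: "\<And>m n c. \<psi>1 m = Some n \<Longrightarrow> e \<le> c \<Longrightarrow> b \<le> c \<Longrightarrow> f c e n = f c b m"
    using g1 s1 unfolding good_def by metis
  have I2: "\<And>m n c. \<psi>2 m = Some n \<Longrightarrow> a \<le> c \<Longrightarrow> e \<le> c \<Longrightarrow> f c a n = f c e m"
    using g2 unfolding good_def a_def e_def by metis
  have R1: "\<And>q. wf_seq q \<Longrightarrow> seq_end q = b \<Longrightarrow> (\<exists>q'. wf_seq q' \<and> seq_end q' = e \<and>
        R1 (pclass q) = pclass q' \<and> peq ([s] @ q') q)"
    using g1 s1 unfolding good_def by metis
  have R2: "\<And>q. wf_seq q \<Longrightarrow> seq_end q = e \<Longrightarrow> (\<exists>q'. wf_seq q' \<and> seq_end q' = a \<and>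
        R2 (pclass q) = pclass q' \<and> peq (l @ q') q)"
    using g2 unfolding good_def a_def e_def by metis
  have RS: "\<forall>Q\<in>paths_to b. R1 Q \<in> paths_to e"
  proof
    fix Q assume "Q \<in> paths_to b"
    then obtain q where q: "wf_seq q" "seq_end q = b" "Q = pclass q" using paths_to_iff by blast
    then show "R1 Q \<in> paths_to e" using R1[OF q(1,2)] paths_to_iff by metis
  qed
  show ?thesis unfolding good_def sa
  proof (intro conjI allI impI)
    show "form b a (\<lambda>m. Option.bind (\<psi>1 m) \<psi>2) (R2 \<circ> R1) (chi_seq f (s # l))"
      unfolding chi_seq_cons by (rule form_compose[OF F1 F2 RS])
  next
    fix m n c assume H: "Option.bind (\<psi>1 m) \<psi>2 = Some n" "a \<le> c" "b \<le> c"
    then obtain n' where n': "\<psi>1 m = Some n'" "\<psi>2 n' = Some n" by (cases "\<psi>1 m") auto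
    obtain d where d: "c \<le> d" "e \<le> d" using dir unfolding upward_directed_def by blast
    have ad: "a \<le> d" "b \<le> d" using H d order_trans by blast+
    have "f d a n = f d b m" using I1[OF n'(1) d(2) ad(2)] I2[OF n'(2) ad(1) d(2)] by simp
    then have "f d c (f c a n) = f d c (f c b m)"
      using f_comp[OF H(2) d(1)] f_comp[OF H(3) d(1)] by simp
    then show "f c a n = f c b m" using f_inj[OF d(1)] by (simp add: inj_eq)
  next
    fix q assume q: "wf_seq q \<and> seq_end q = b"
    obtain q1 where q1: "wf_seq q1" "seq_end q1 = e" "R1 (pclass q) = pclass q1" "peq ([s] @ q1) q"
      using R1 q by blast
    obtain q2 where q2: "wf_seq q2" "seq_end q2 = a" "R2 (pclass q1) = pclass q2" "peq (l @ q2) q1"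
      using R2 q1 by blast
    have wlq: "wf_seq (l @ q2)" using peq_props[OF q2(4)] by simp
    have "wf_seq ([s] @ (l @ q2))" using w wlq l wf_nonempty[OF q2(1)] wf_append[of "[s]" "l @ q2"]
      wf_append[of "[s]" l] by simp
    then have "peq ([s] @ (l @ q2)) ([s] @ q1)" using peq_left[OF q2(4)] by blast
    then have "peq ((s # l) @ q2) q" using q1(4) peq.trans by simp
    then show "\<exists>q'. wf_seq q' \<and> seq_end q' = a \<and> (R2 \<circ> R1) (pclass q) = pclass q' \<and> peq ((s # l) @ q') q"
      using q1 q2 by auto
  qed
qed

lemma good_exists:
  assumes f_inj: "\<And>a b. a \<le> b \<Longrightarrow> inj (f b a)"
    and f_comp: "\<And>a b c. a \<le> b \<Longrightarrow> b \<le> c \<Longrightarrow> f c a = f c b \<circ> f b a"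
    and dir: "upward_directed TYPE('k::order)"
  shows "wf_seq (l::'k epath list) \<Longrightarrow> \<exists>\<psi> R. good f l \<psi> R"
proof (induction l)
  case Nil then show ?case by (simp add: wf_chain)
next
  case (Cons s l)
  have v: "ep_valid s" using Cons.prems by (cases l) auto
  obtain \<psi>1 R1 where g1: "good f [s] \<psi>1 R1" using good_elem[of f, OF f_inj f_comp v] by blast
  show ?case
  proof (cases "l = []")
    case True then show ?thesis using g1 by blast
  next
    case False
    then have "wf_seq l" using Cons.prems by (cases l) auto
    then obtain \<psi>2 R2 where g2: "good f l \<psi>2 R2" using Cons.IH by blast
    show ?thesis using good_cons[of f, OF f_inj f_comp dir g1 g2 Cons.prems False] by blast
  qed
qed




definition restr :: "'i set \<Rightarrow> ('i \<Rightarrow> complex) \<Rightarrow> ('i \<Rightarrow> complex)" where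
  "restr J x = (\<lambda>i. if i \<in> J then x i else 0)"

lemma ell2_sq_le: assumes "x \<in> ell2 I" "\<And>i. cmod (y i) \<le> cmod (x i)" "\<And>i. i \<notin> I \<Longrightarrow> y i = 0"
  shows "y \<in> ell2 I"
proof -
  have "(\<lambda>i. (cmod (x i))\<^sup>2) summable_on UNIV" using assms(1) unfolding ell2_def by blast
  then have "(\<lambda>i. (cmod (y i))\<^sup>2) summable_on UNIV"
    by (rule summable_on_comparison_test) (use assms(2) in \<open>auto intro: power_mono\<close>)
  then show ?thesis using assms(3) unfolding ell2_def by blast
qed

lemma ell2_restr: "x \<in> ell2 I \<Longrightarrow> restr J x \<in> ell2 I"
  by (rule ell2_sq_le) (auto simp: restr_def ell2_def)

lemma ell2_add: assumes "x \<in> ell2 I" "y \<in> ell2 I" shows "(\<lambda>i. x i + y i) \<in> ell2 I"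
proof -
  have sx: "(\<lambda>i. (cmod (x i))\<^sup>2) summable_on UNIV" and sy: "(\<lambda>i. (cmod (y i))\<^sup>2) summable_on UNIV"
    using assms unfolding ell2_def by blast+
  have "(\<lambda>i. 2 * (cmod (x i))\<^sup>2 + 2 * (cmod (y i))\<^sup>2) summable_on UNIV"
    by (intro summable_on_add summable_on_cmult_right sx sy)
  then have "(\<lambda>i. (cmod (x i + y i))\<^sup>2) summable_on UNIV"
  proof (rule summable_on_comparison_test)
    fix i
    have "cmod (x i + y i) \<le> cmod (x i) + cmod (y i)" by (rule norm_triangle_ineq)
    then have "(cmod (x i + y i))\<^sup>2 \<le> (cmod (x i) + cmod (y i))\<^sup>2" by (simp add: power_mono)
    also have "\<dots> \<le> 2 * (cmod (x i))\<^sup>2 + 2 * (cmod (y i))\<^sup>2"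
      by (smt (verit) sum_squares_ge_zero power2_sum sum_power2_ge_zero power2_diff
          zero_le_power2 [of "cmod (x i) - cmod (y i)"])
    finally show "(cmod (x i + y i))\<^sup>2 \<le> 2 * (cmod (x i))\<^sup>2 + 2 * (cmod (y i))\<^sup>2" .
  qed simp
  then show ?thesis using assms unfolding ell2_def by auto
qed

lemma ell2_scale: assumes "x \<in> ell2 I" shows "(\<lambda>i. c * x i) \<in> ell2 I"
proof -
  have sx: "(\<lambda>i. (cmod (x i))\<^sup>2) summable_on UNIV" using assms unfolding ell2_def by blast
  have "(\<lambda>i. (cmod c)\<^sup>2 * (cmod (x i))\<^sup>2) summable_on UNIV"
    by (intro summable_on_cmult_right sx)
  then have "(\<lambda>i. (cmod (c * x i))\<^sup>2) summable_on UNIV" by (simp add: norm_mult power_mult_distrib)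
  then show ?thesis using assms unfolding ell2_def by auto
qed

lemma ell2_zero: "(\<lambda>i. 0) \<in> ell2 I"
  unfolding ell2_def by simp

lemma orth_proj_restr:
  "is_orth_proj (ell2 I) {x \<in> ell2 I. \<forall>i. i \<notin> J \<longrightarrow> x i = 0} (restr J)"
  unfolding is_orth_proj_def lin_subspace_def
proof (intro conjI ballI allI)
  show "{x \<in> ell2 I. \<forall>i. i \<notin> J \<longrightarrow> x i = 0} \<subseteq> ell2 I" by blast
  show "(\<lambda>i. 0) \<in> {x \<in> ell2 I. \<forall>i. i \<notin> J \<longrightarrow> x i = 0}" using ell2_zero by blast
next
  fix x y assume "x \<in> {x \<in> ell2 I. \<forall>i. i \<notin> J \<longrightarrow> x i = 0}" "y \<in> {x \<in> ell2 I. \<forall>i. i \<notin> J \<longrightarrow> x i = 0}"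
  then show "(\<lambda>i. x i + y i) \<in> {x \<in> ell2 I. \<forall>i. i \<notin> J \<longrightarrow> x i = 0}" using ell2_add by auto
next
  fix c x assume "x \<in> {x \<in> ell2 I. \<forall>i. i \<notin> J \<longrightarrow> x i = 0}"
  then show "(\<lambda>i. c * x i) \<in> {x \<in> ell2 I. \<forall>i. i \<notin> J \<longrightarrow> x i = 0}" using ell2_scale by auto
next
  fix x assume "x \<in> ell2 I"
  then show "restr J x \<in> {x \<in> ell2 I. \<forall>i. i \<notin> J \<longrightarrow> x i = 0}" using ell2_restr by (auto simp: restr_def)
next
  fix x v assume "v \<in> {x \<in> ell2 I. \<forall>i. i \<notin> J \<longrightarrow> x i = 0}"
  then have "(\<lambda>i. cnj (v i) * (x i - restr J x i)) = (\<lambda>i. 0)" by (auto simp: restr_def fun_eq_iff)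
  then show "l2inner v (\<lambda>i. x i - restr J x i) = 0" unfolding l2inner_def by simp
qed

lemma l2norm_tens: "l2norm (tens a g s) = l2norm g"
proof -
  let ?e = "\<lambda>n. (a, n, s)"
  have "(\<Sum>\<^sub>\<infinity>i. (cmod (tens a g s i))\<^sup>2) = (\<Sum>\<^sub>\<infinity>i\<in>range ?e. (cmod (tens a g s i))\<^sup>2)"
    by (rule infsum_cong_neutral) (auto simp: tens_def)
  also have "\<dots> = (\<Sum>\<^sub>\<infinity>n. (cmod (g n))\<^sup>2)"
    by (subst infsum_reindex) (auto simp: inj_on_def tens_def o_def)
  finally show ?thesis unfolding l2norm_def by simp
qed

lemma l2norm_restr: assumes "h \<in> ell2 UNIV"
  shows "l2norm (restr D h) = l2norm h \<longleftrightarrow> (\<forall>n. n \<notin> D \<longrightarrow> h n = 0)"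
proof
  assume H: "\<forall>n. n \<notin> D \<longrightarrow> h n = 0"
  then have "restr D h = h" by (auto simp: restr_def fun_eq_iff)
  then show "l2norm (restr D h) = l2norm h" by simp
next
  assume E: "l2norm (restr D h) = l2norm h"
  show "\<forall>n. n \<notin> D \<longrightarrow> h n = 0"
  proof (rule ccontr)
    assume "\<not> (\<forall>n. n \<notin> D \<longrightarrow> h n = 0)"
    then obtain n0 where n0: "n0 \<notin> D" "h n0 \<noteq> 0" by blast
    have s1: "(\<lambda>i. (cmod (h i))\<^sup>2) summable_on UNIV" using assms unfolding ell2_def by blast
    have s2: "(\<lambda>i. (cmod (restr D h i))\<^sup>2) summable_on UNIV"
      using ell2_restr[OF assms] unfolding ell2_def by blast
    have "(\<Sum>\<^sub>\<infinity>i. (cmod (restr D h i))\<^sup>2) < (\<Sum>\<^sub>\<infinity>i. (cmod (h i))\<^sup>2)"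
    proof (rule has_sum_strict_mono[OF has_sum_infsum[OF s2] has_sum_infsum[OF s1]])
      show "(cmod (restr D h x))\<^sup>2 \<le> (cmod (h x))\<^sup>2" for x by (simp add: restr_def)
      show "n0 \<in> UNIV" by simp
      show "(cmod (restr D h n0))\<^sup>2 < (cmod (h n0))\<^sup>2" using n0 by (simp add: restr_def)
    qed
    then show False using E unfolding l2norm_def by simp
  qed
qed

theorem theorem3p8:
  fixes f :: "'k::order \<Rightarrow> 'k \<Rightarrow> nat \<Rightarrow> nat"
    and a :: 'k and p :: "'k epath list"
  assumes f_inj: "\<And>a b. a \<le> b \<Longrightarrow> inj (f b a)"
    and f_id: "\<And>a. f a a = id"
    and f_comp: "\<And>a b c. a \<le> b \<Longrightarrow> b \<le> c \<Longrightarrow> f c a = f c b \<circ> f b a"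
    and directed: "upward_directed TYPE('k)"
    and loop: "is_loop p a"
  shows "(\<exists>V. is_orth_proj HH V (chi_seq f p)) \<and>
    (\<exists>Q. is_orth_proj (ell2 UNIV) (pdom f p) Q \<and>
       (\<forall>x\<in>HH. chi_seq f p x =
          (\<lambda>(c, n, P). if c = a \<and> P \<in> paths_to a then Q (\<lambda>m. x (a, m, P)) n else 0)))"
proof -
  have wp: "wf_seq p" and ea: "seq_end p = a" and sa: "seq_start p = a"
    using loop unfolding is_loop_def by auto
  obtain \<psi> R where g: "good f p \<psi> R" using good_exists[of f, OF f_inj f_comp directed wp] by blast
  have F: "form a a \<psi> R (chi_seq f p)" using g ea sa unfolding good_def by simp
  note G2 = conjunct1[OF conjunct2[OF g[unfolded good_def]]]
  note G3 = conjunct2[OF conjunct2[OF g[unfolded good_def]]]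
  have psi: "n = m" if "\<psi> m = Some n" for m n
  proof -
    have "f a a n = f a a m" using G2[rule_format, OF that, of a] ea sa by simp
    then show ?thesis using f_id by simp
  qed
  have RQ: "R Q = Q" if QS: "Q \<in> paths_to a" for Q
  proof -
    obtain q where q: "wf_seq q" "seq_end q = a" "Q = pclass q" using paths_to_iff[THEN iffD1, OF QS] by blast
    obtain q' where q': "wf_seq q'" "seq_end q' = a" "R (pclass q) = pclass q'" "peq (p @ q') q"
      using G3[rule_format, of q] q ea sa by auto
    have pt: "peq p [Dn a a]" using loop_triv[OF directed loop] .
    have w: "wf_seq (p @ q')" using peq_props[OF q'(4)] by simp
    have "peq (p @ q') ([Dn a a] @ q')" using peq_right[OF pt w] .
    also have "peq ([Dn a a] @ q') q'" using Dnaa[OF q'(1,2)] by simp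
    finally have "peq q' q" using peq.trans[OF peq.sym q'(4)] by blast
    then show ?thesis using q q'(3) pclass_eq_iff[OF q'(1)] by simp
  qed
  define D where "D = {m. \<psi> m \<noteq> None}"
  define J where "J = {(c, m, P). c = a \<and> P \<in> paths_to a \<and> m \<in> D}"
  have chi: "chi_seq f p x = restr J x" for x
  proof
    fix i :: "'k idx"
    obtain c m Q where i: "i = (c, m, Q)" by (cases i) auto
    have "chi_seq f p x (c, m, Q) = (if c = a \<and> Q \<in> paths_to a then
      (case \<psi> m of None \<Rightarrow> 0 | Some n \<Rightarrow> x (a, n, R Q)) else 0)"
      using spec[OF F[unfolded form_def], of x] by (simp only: prod.case)
    also have "\<dots> = restr J x (c, m, Q)"
      by (cases "\<psi> m") (auto simp: restr_def J_def D_def RQ dest: psi)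
    finally show "chi_seq f p x i = restr J x i" using i by simp
  qed
  have chi': "chi_seq f p = restr J" using chi by (rule ext)
  have c1: "\<exists>V. is_orth_proj HH V (chi_seq f p)"
    unfolding HH_def chi' using orth_proj_restr[of Hidx J] by (rule exI)
  have sne: "pclass [Dn a a] \<in> paths_to a" unfolding paths_to_iff by (rule exI[of _ "[Dn a a]"]) simp
  have tens: "chi_seq f p (tens a h s) = tens a (restr D h) s" if "s \<in> paths_to a" for h s
    unfolding chi using that by (auto simp: fun_eq_iff restr_def tens_def J_def)
  have pd: "pdom f p = {h \<in> ell2 UNIV. \<forall>n. n \<notin> D \<longrightarrow> h n = 0}"
    unfolding pdom_def sa
  proof (intro set_eqI iffI)
    fix h assume "h \<in> {h \<in> ell2 UNIV. \<forall>s\<in>paths_to a. l2norm (chi_seq f p (tens a h s)) = l2norm h}"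
    then have "h \<in> ell2 UNIV" "l2norm (restr D h) = l2norm h"
      using sne tens by (auto simp: l2norm_tens)
    then show "h \<in> {h \<in> ell2 UNIV. \<forall>n. n \<notin> D \<longrightarrow> h n = 0}" using l2norm_restr by blast
  next
    fix h assume H: "h \<in> {h \<in> ell2 UNIV. \<forall>n. n \<notin> D \<longrightarrow> h n = 0}"
    then have "l2norm (restr D h) = l2norm h" using l2norm_restr by blast
    then show "h \<in> {h \<in> ell2 UNIV. \<forall>s\<in>paths_to a. l2norm (chi_seq f p (tens a h s)) = l2norm h}"
      using H tens by (auto simp: l2norm_tens)
  qed
  have c2: "\<forall>x\<in>HH. chi_seq f p x =
          (\<lambda>(c, n, P). if c = a \<and> P \<in> paths_to a then restr D (\<lambda>m. x (a, m, P)) n else 0)"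
    unfolding chi by (auto simp: fun_eq_iff restr_def J_def)
  have "is_orth_proj (ell2 UNIV) (pdom f p) (restr D)" unfolding pd by (rule orth_proj_restr)
  then show ?thesis using c1 c2 by blast
qed


end
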